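(* Let $f_0$ be an arithmetic function, let $m\ge1$ and $n\ge1$. Then $C_m(n)=C_1(n)\,L_n^{m-1}$; explicitly, for $1\le k\le n$, \[c_m(n,k)=\sum_{i=k}^n(m-1)^{i-k}\binom{i-1}{k-1}c_1(n,i).\]
   Context: An arithmetic function is a function $f_0:\{1,2,\ldots\}\to\mathbb{C}$. For $m\ge 1$, $f_m$ is the invert transform of $f_{m-1}$, i.e. $f_m(n)=f_{m-1}(n)+\sum_{i=1}^{n-1}f_{m-1}(i)f_m(n-i)$ for $n\ge1$. For $m\ge1$ the numbers $c_m(n,k)$, $0\le k\le n$, are defined by $c_m(0,0)=1$, $c_m(n,0)=0$ for $n\ge1$, and $c_m(n,k)=\sum_{i=1}^{n-k+1}f_{m-1}(i)\,c_m(n-i,k-1)$ for $1\le k\le n$. $C_m(n)$ is the $n\times n$ lower triangular matrix whose $(r,k)$ entry is $c_m(r,k)$ for $1\le k\le r\le n$ (and $0$ for $k>r$), and $L_n$ is the $n\times n$ lower triangular Pascal matrix whose $(r,k)$ entry is $\binom{r-1}{k-1}$; $L_n^0$ is the identity. The convention $0^0=1$ is used. *)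

theory Defs
  imports Complex_Main "Jordan_Normal_Form.Matrix"
begin

text \<open>Arithmetic functions are modelled as functions nat => complex; the value at 0 is ignored.\<close>

function invert :: "(nat \<Rightarrow> complex) \<Rightarrow> nat \<Rightarrow> complex" where
  "invert g n = g n + (\<Sum>i\<in>{1..<n}. g i * invert g (n - i))"
  by auto
termination
  by (relation "measure snd") auto

primrec fseq :: "(nat \<Rightarrow> complex) \<Rightarrow> nat \<Rightarrow> nat \<Rightarrow> complex" where
  "fseq f0 0 = f0"
| "fseq f0 (Suc m) = invert (fseq f0 m)"

primrec cc :: "(nat \<Rightarrow> complex) \<Rightarrow> nat \<Rightarrow> nat \<Rightarrow> complex" where
  "cc g n 0 = (if n = 0 then 1 else 0)"
| "cc g n (Suc k) = (if Suc k \<le> n then (\<Sum>i = 1..n - k. g i * cc g (n - i) k) else 0)"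

definition cm :: "(nat \<Rightarrow> complex) \<Rightarrow> nat \<Rightarrow> nat \<Rightarrow> nat \<Rightarrow> complex" where
  "cm f0 m n k = cc (fseq f0 (m - 1)) n k"

definition Cmat :: "(nat \<Rightarrow> complex) \<Rightarrow> nat \<Rightarrow> nat \<Rightarrow> complex mat" where
  "Cmat f0 m n = mat n n (\<lambda>(r, k). if k \<le> r then cm f0 m (r + 1) (k + 1) else 0)"

text \<open>Lower triangular Pascal matrix L_n, (r,k) entry binom(r-1,k-1) (1-based).\<close>
definition Lmat :: "nat \<Rightarrow> complex mat" where
  "Lmat n = mat n n (\<lambda>(r, k). of_nat (r choose k))"

end

theory Submission
  imports Defs "HOL-Computational_Algebra.Formal_Power_Series"
begin

declare invert.simps[simp del]

definition FF :: "(nat \<Rightarrow> complex) \<Rightarrow> complex fps" where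
  "FF g = Abs_fps (\<lambda>n. if n = 0 then 0 else g n)"

lemma FF0: "fps_nth (FF g) 0 = 0" by (simp add: FF_def)

lemma cc_zero: "n < k \<Longrightarrow> cc g n k = 0"
  by (cases k) auto

lemma cc_fps: "cc g n k = fps_nth (FF g ^ k) n"
proof (induction k arbitrary: n)
  case 0
  then show ?case by simp
next
  case (Suc k)
  have "fps_nth (FF g ^ Suc k) n = (\<Sum>i=0..n. fps_nth (FF g) i * cc g (n - i) k)"
    by (simp add: fps_mult_nth Suc.IH)
  also have "\<dots> = (\<Sum>i=1..n. g i * cc g (n - i) k)"
    by (simp add: FF_def sum.atLeast_Suc_atMost)
  also have "\<dots> = cc g n (Suc k)"
  proof (cases "Suc k \<le> n")
    case True
    have "(\<Sum>i=1..n. g i * cc g (n - i) k) = (\<Sum>i=1..n-k. g i * cc g (n - i) k)"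
      by (rule sum.mono_neutral_right) (auto simp: cc_zero)
    then show ?thesis using True by simp
  next
    case False
    then show ?thesis by (auto intro!: sum.neutral simp: cc_zero)
  qed
  finally show ?case by simp
qed

lemma FF_invert: "FF (invert g) * (1 - FF g) = FF g"
proof (rule fps_ext)
  fix n
  show "fps_nth (FF (invert g) * (1 - FF g)) n = fps_nth (FF g) n"
  proof (cases n)
    case 0 then show ?thesis by (simp add: FF_def)
  next
    case (Suc m)
    have "fps_nth (FF (invert g) * FF g) n = (\<Sum>i=0..n. fps_nth (FF (invert g)) i * fps_nth (FF g) (n-i))"
      by (simp add: fps_mult_nth)
    also have "\<dots> = (\<Sum>i\<in>{1..<n}. g i * invert g (n - i))"
    proof -
      have "(\<Sum>i=0..n. fps_nth (FF (invert g)) i * fps_nth (FF g) (n-i)) = (\<Sum>i=0..n. fps_nth (FF (invert g)) (n-i) * fps_nth (FF g) i)"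
        by (rule sum.reindex_bij_witness[of _ "\<lambda>i. n - i" "\<lambda>i. n - i"]) auto
      also have "\<dots> = (\<Sum>i\<in>{1..<n}. g i * invert g (n - i))"
        using Suc by (auto simp: FF_def sum.atLeast_Suc_atMost atLeastLessThanSuc_atLeastAtMost[symmetric] mult.commute sum.atLeast_Suc_lessThan)
      finally show ?thesis .
    qed
    finally have "fps_nth (FF (invert g) * FF g) n = (\<Sum>i\<in>{1..<n}. g i * invert g (n - i))" .
    moreover have "invert g n = g n + (\<Sum>i\<in>{1..<n}. g i * invert g (n - i))"
      by (rule invert.simps)
    ultimately show ?thesis using Suc by (simp add: algebra_simps FF_def)
  qed
qed

lemma FF_fseq: "FF (fseq f0 p) * (1 - fps_const (of_nat p) * FF f0) = FF f0"
proof (induction p)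
  case 0 then show ?case by simp
next
  case (Suc p)
  define G where "G = FF (fseq f0 p)"
  define G' where "G' = FF (fseq f0 (Suc p))"
  define H where "H = FF f0"
  define A where "A = 1 - fps_const (of_nat p) * H"
  have IH: "G * A = H" using Suc.IH by (simp add: G_def A_def H_def)
  have inv: "G' * (1 - G) = G" by (simp add: G'_def G_def FF_invert)
  have "G' * (1 - G) * A = G * A" by (simp add: inv)
  hence "G' * (A - G * A) = H" using IH by (simp add: algebra_simps)
  hence "G' * (A - H) = H" using IH by simp
  moreover have "A - H = 1 - fps_const (of_nat (Suc p)) * H"
    by (simp add: A_def algebra_simps fps_const_add[symmetric])
  ultimately show ?case by (simp add: G'_def H_def)
qed

definition DD :: "nat \<Rightarrow> complex \<Rightarrow> complex fps" where
  "DD k c = Abs_fps (\<lambda>j. of_nat ((k + j - 1) choose j) * c ^ j)"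

lemma DD_0: "DD 0 c = 1"
  by (rule fps_ext) (auto simp: DD_def)

lemma DD_step: "DD (Suc k) c * (1 - fps_const c * fps_X) = DD k c"
proof (rule fps_ext)
  fix j
  have e: "DD (Suc k) c * (1 - fps_const c * fps_X) = DD (Suc k) c - fps_const c * (fps_X * DD (Suc k) c)"
    by (simp add: algebra_simps)
  show "fps_nth (DD (Suc k) c * (1 - fps_const c * fps_X)) j = fps_nth (DD k c) j"
  proof (cases j)
    case 0 then show ?thesis by (simp add: e DD_def)
  next
    case (Suc j')
    have "(Suc (k + j') choose Suc j') = (k + j' choose j') + (k + j' choose Suc j')"
      by simp
    then show ?thesis using Suc
      by (simp add: e DD_def algebra_simps)
  qed
qed

lemma DD_pow: "DD k c * (1 - fps_const c * fps_X) ^ k = 1"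
proof (induction k)
  case 0 then show ?case by (simp add: DD_0)
next
  case (Suc k)
  have "DD (Suc k) c * (1 - fps_const c * fps_X) ^ Suc k = (DD (Suc k) c * (1 - fps_const c * fps_X)) * (1 - fps_const c * fps_X) ^ k"
    by (simp add: algebra_simps)
  also have "\<dots> = 1" using Suc.IH by (simp add: DD_step)
  finally show ?case .
qed

lemma compose_lin: "fps_nth H 0 = 0 \<Longrightarrow> (1 - fps_const c * fps_X) oo H = 1 - fps_const c * (H::complex fps)"
  by (simp add: fps_compose_sub_distrib fps_const_mult_apply_left[symmetric])

lemma EE_compose:
  assumes H0: "fps_nth H 0 = 0"
  shows "((fps_X ^ k * DD k c) oo H) * (1 - fps_const c * H) ^ k = (H::complex fps) ^ k"
proof -
  have "fps_X ^ k * DD k c * (1 - fps_const c * fps_X) ^ k = fps_X ^ k"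
    using DD_pow[of k c] by (metis mult.assoc mult_1_right)
  hence "(fps_X ^ k * DD k c * (1 - fps_const c * fps_X) ^ k) oo H = fps_X ^ k oo H" by (rule arg_cong[where f="\<lambda>x. x oo H"])
  thus ?thesis using H0
    by (simp add: fps_compose_mult_distrib fps_compose_power[symmetric] compose_lin fps_X_power_compose)
qed

lemma explicit:
  assumes "1 \<le> k"
  shows "cc (fseq f0 p) n k = (\<Sum>i = k..n. of_nat p ^ (i - k) * of_nat ((i - 1) choose (k - 1)) * cc f0 n i)"
proof -
  define H where "H = FF f0"
  define G where "G = FF (fseq f0 p)"
  define c :: complex where "c = of_nat p"
  have H0: "fps_nth H 0 = 0" by (simp add: H_def FF0)
  have "G * (1 - fps_const c * H) = H" by (simp add: G_def H_def c_def FF_fseq)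
  hence "(G * (1 - fps_const c * H)) ^ k = H ^ k" by (rule arg_cong)
  hence "G ^ k * (1 - fps_const c * H) ^ k = H ^ k" by (simp only: power_mult_distrib)
  hence eq: "G ^ k * (1 - fps_const c * H) ^ k = ((fps_X ^ k * DD k c) oo H) * (1 - fps_const c * H) ^ k"
    using EE_compose[OF H0] by simp
  have nz: "(1 - fps_const c * H) ^ k \<noteq> 0"
  proof
    assume "(1 - fps_const c * H) ^ k = 0"
    hence "fps_nth ((1 - fps_const c * H) ^ k) 0 = 0" by simp
    thus False using H0 by (simp add: fps_nth_power_0)
  qed
  have Gk: "G ^ k = (fps_X ^ k * DD k c) oo H"
    using mult_right_cancel[OF nz] eq by (rule iffD1)
  have "cc (fseq f0 p) n k = fps_nth (G ^ k) n" by (simp add: G_def cc_fps)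
  also have "\<dots> = (\<Sum>i=0..n. fps_nth (fps_X ^ k * DD k c) i * fps_nth (H ^ i) n)"
    by (simp add: Gk fps_compose_nth)
  also have "\<dots> = (\<Sum>i=k..n. fps_nth (fps_X ^ k * DD k c) i * fps_nth (H ^ i) n)"
    by (rule sum.mono_neutral_right) (auto simp: fps_X_power_mult_nth)
  also have "\<dots> = (\<Sum>i = k..n. of_nat p ^ (i - k) * of_nat ((i - 1) choose (k - 1)) * cc f0 n i)"
  proof (rule sum.cong[OF refl])
    fix i assume i: "i \<in> {k..n}"
    have "k + (i - k) - 1 = i - 1" using i assms by auto
    moreover have "(i - 1 choose (i - k)) = (i - 1 choose (k - 1))"
    proof -
      have a: "i - k \<le> i - 1" and b: "i - 1 - (i - k) = k - 1" using i assms by auto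
      show ?thesis using binomial_symmetric[OF a] b by simp
    qed
    ultimately show "fps_nth (fps_X ^ k * DD k c) i * fps_nth (H ^ i) n = of_nat p ^ (i - k) * of_nat ((i - 1) choose (k - 1)) * cc f0 n i"
      using i by (simp add: fps_X_power_mult_nth DD_def c_def H_def cc_fps)
  qed
  finally show ?thesis .
qed

lemma comb:
  "(\<Sum>j<n. (of_nat p::complex) ^ (i - j) * of_nat (i choose j) * of_nat (j choose k))
     = of_nat (Suc p) ^ (i - k) * of_nat (i choose k)" if "i < n"
proof (cases "k \<le> i")
  case False
  then show ?thesis
    by (auto intro!: sum.neutral simp: binomial_eq_0)
next
  case True
  have "(\<Sum>j<n. (of_nat p::complex) ^ (i - j) * of_nat (i choose j) * of_nat (j choose k))
      = (\<Sum>j\<in>{k..i}. (of_nat p::complex) ^ (i - j) * of_nat (i choose j) * of_nat (j choose k))"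
    using that by (intro sum.mono_neutral_right) (auto simp: binomial_eq_0)
  also have "\<dots> = (\<Sum>j\<in>{k..i}. of_nat (i choose k) * (of_nat ((i - k) choose (j - k)) * (of_nat p::complex) ^ (i - j)))"
  proof (rule sum.cong[OF refl])
    fix j assume j: "j \<in> {k..i}"
    have "(i choose j) * (j choose k) = (i choose k) * ((i - k) choose (j - k))"
      using j by (intro choose_mult) auto
    hence "(of_nat (i choose j) * of_nat (j choose k) :: complex) = of_nat (i choose k) * of_nat ((i - k) choose (j - k))"
      by (metis of_nat_mult)
    thus "(of_nat p::complex) ^ (i - j) * of_nat (i choose j) * of_nat (j choose k) = of_nat (i choose k) * (of_nat ((i - k) choose (j - k)) * (of_nat p::complex) ^ (i - j))"
      by (simp add: algebra_simps)
  qed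
  also have "\<dots> = of_nat (i choose k) * (\<Sum>j\<in>{k..i}. of_nat ((i - k) choose (j - k)) * (of_nat p::complex) ^ (i - j))"
    by (simp add: sum_distrib_left)
  also have "(\<Sum>j\<in>{k..i}. of_nat ((i - k) choose (j - k)) * (of_nat p::complex) ^ (i - j))
     = (\<Sum>t\<le>i - k. of_nat ((i - k) choose t) * 1 ^ t * (of_nat p::complex) ^ (i - k - t))"
    using True by (intro sum.reindex_bij_witness[of _ "\<lambda>t. t + k" "\<lambda>j. j - k"]) auto
  also have "\<dots> = (1 + of_nat p) ^ (i - k)"
    by (rule binomial_ring[symmetric])
  finally show ?thesis by (simp add: algebra_simps)
qed

lemma Lmat_carrier: "Lmat n \<in> carrier_mat n n" by (simp add: Lmat_def)

lemma Lmat_idx: "j < n \<Longrightarrow> k < n \<Longrightarrow> Lmat n $$ (j, k) = of_nat (j choose k)"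
  by (simp add: Lmat_def)

lemma Lpow: "i < n \<Longrightarrow> k < n \<Longrightarrow> (Lmat n ^\<^sub>m p) $$ (i, k) = of_nat p ^ (i - k) * of_nat (i choose k)"
proof (induction p arbitrary: i k)
  case 0
  then show ?case using Lmat_carrier[of n]
    by (auto simp: Lmat_def binomial_eq_0)
next
  case (Suc p)
  have "(Lmat n ^\<^sub>m Suc p) $$ (i, k) = (\<Sum>j<n. (Lmat n ^\<^sub>m p) $$ (i, j) * Lmat n $$ (j, k))"
    using Suc.prems Lmat_carrier[of n]
    by (simp add: scalar_prod_def lessThan_atLeast0)
  also have "\<dots> = (\<Sum>j<n. (of_nat p::complex) ^ (i - j) * of_nat (i choose j) * of_nat (j choose k))"
    using Suc.prems by (intro sum.cong) (auto simp: Suc.IH Lmat_idx)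
  also have "\<dots> = of_nat (Suc p) ^ (i - k) * of_nat (i choose k)"
    by (rule comb) (rule Suc.prems)
  finally show ?case .
qed

lemma Cmat_idx: "r < n \<Longrightarrow> k < n \<Longrightarrow> Cmat f0 m n $$ (r, k) = (if k \<le> r then cm f0 m (r + 1) (k + 1) else 0)"
  by (simp add: Cmat_def)

theorem proposition9:
  fixes f0 :: "nat \<Rightarrow> complex" and m n :: nat
  assumes "m \<ge> 1" and "n \<ge> 1"
  shows "Cmat f0 m n = Cmat f0 1 n * (Lmat n ^\<^sub>m (m - 1))
    \<and> (\<forall>k. 1 \<le> k \<and> k \<le> n \<longrightarrow>
          cm f0 m n k = (\<Sum>i = k..n. of_nat (m - 1) ^ (i - k) * of_nat ((i - 1) choose (k - 1)) * cm f0 1 n i))"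
proof
  define p where "p = m - 1"
  have ex: "cm f0 m N k = (\<Sum>i = k..N. of_nat p ^ (i - k) * of_nat ((i - 1) choose (k - 1)) * cm f0 1 N i)"
    if "1 \<le> k" for N k
    using explicit[OF that, of f0 p N] by (simp add: cm_def p_def)
  show "\<forall>k. 1 \<le> k \<and> k \<le> n \<longrightarrow>
          cm f0 m n k = (\<Sum>i = k..n. of_nat (m - 1) ^ (i - k) * of_nat ((i - 1) choose (k - 1)) * cm f0 1 n i)"
    using ex by (simp add: p_def)
  have LP: "Lmat n ^\<^sub>m p \<in> carrier_mat n n" using Lmat_carrier by simp
  have C1: "Cmat f0 1 n \<in> carrier_mat n n" by (simp add: Cmat_def)
  show "Cmat f0 m n = Cmat f0 1 n * (Lmat n ^\<^sub>m (m - 1))"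
    unfolding p_def[symmetric]
  proof (rule eq_matI)
    fix r k assume r: "r < dim_row (Cmat f0 1 n * Lmat n ^\<^sub>m p)" and k: "k < dim_col (Cmat f0 1 n * Lmat n ^\<^sub>m p)"
    have rn: "r < n" and kn: "k < n" using r k LP C1 by auto
    have "(Cmat f0 1 n * Lmat n ^\<^sub>m p) $$ (r, k) = (\<Sum>i<n. Cmat f0 1 n $$ (r, i) * (Lmat n ^\<^sub>m p) $$ (i, k))"
      using rn kn carrier_matD[OF LP] carrier_matD[OF C1] by (simp add: scalar_prod_def lessThan_atLeast0)
    also have "\<dots> = (\<Sum>i<n. (if i \<le> r then cm f0 1 (r + 1) (i + 1) else 0) * (of_nat p ^ (i - k) * of_nat (i choose k)))"
      using rn kn by (intro sum.cong) (auto simp: Cmat_idx Lpow)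
    also have "\<dots> = Cmat f0 m n $$ (r, k)"
    proof (cases "k \<le> r")
      case False
      then show ?thesis using rn kn by (auto intro!: sum.neutral simp: Cmat_idx binomial_eq_0)
    next
      case True
      have "(\<Sum>i<n. (if i \<le> r then cm f0 1 (r + 1) (i + 1) else 0) * (of_nat p ^ (i - k) * of_nat (i choose k)))
          = (\<Sum>i\<in>{k..r}. (if i \<le> r then cm f0 1 (r + 1) (i + 1) else 0) * (of_nat p ^ (i - k) * of_nat (i choose k)))"
        using rn by (intro sum.mono_neutral_right) (auto simp: binomial_eq_0)
      also have "\<dots> = (\<Sum>i = k + 1..r + 1. of_nat p ^ (i - (k + 1)) * of_nat ((i - 1) choose (k + 1 - 1)) * cm f0 1 (r + 1) i)"
        by (intro sum.reindex_bij_witness[of _ "\<lambda>i. i - 1" "\<lambda>i. i + 1"]) auto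
      also have "\<dots> = cm f0 m (r + 1) (k + 1)" by (rule ex[symmetric]) simp
      finally show ?thesis using True rn kn by (simp add: Cmat_idx)
    qed
    finally show "Cmat f0 m n $$ (r, k) = (Cmat f0 1 n * Lmat n ^\<^sub>m p) $$ (r, k)" by simp
  next
    show "dim_row (Cmat f0 m n) = dim_row (Cmat f0 1 n * Lmat n ^\<^sub>m p)"
      using C1 by (simp add: Cmat_def)
    show "dim_col (Cmat f0 m n) = dim_col (Cmat f0 1 n * Lmat n ^\<^sub>m p)"
      using carrier_matD[OF LP] by (simp add: Cmat_def del: pow_mat_dim)
  qed
qed

end
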